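(* Let $Y_0$ and $Y_1$ be real-valued random variables on a common probability space, with marginal cumulative distribution functions $F_0$ and $F_1$, and let $Q_j(u)=\inf\{y\in\mathbb{R}: F_j(y)\geq u\}$, $j\in\{0,1\}$, be their left-continuous generalized inverses. Let $U\sim U(0,1)$ be a random variable on the same space with $Y_0=Q_0(U)$ (the joint distribution of $(U,Y_1)$ is otherwise arbitrary). Let $f:\mathbb{R}\to\mathbb{R}$ be a nondecreasing convex function and $g:\mathbb{R}\to\mathbb{R}$ a nonincreasing convex function. Then for every $0\leq a<b\leq 1$, \[ \int_a^b f(Q_1(u-a)-Q_0(u))\,du\leq\mathbb{E}[f(Y_1-Y_0)\mathbbm{1}\{a<U<b\}]\leq\int_a^b f(Q_1(1-u+a)-Q_0(u))\,du, \] \[ \int_a^b g(Q_1(1-b+u)-Q_0(u))\,du\leq\mathbb{E}[g(Y_1-Y_0)\mathbbm{1}\{a<U<b\}]\leq\int_a^b g(Q_1(b-u)-Q_0(u))\,du. \]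
   Context: $\mathbbm{1}\{\cdot\}$ denotes the indicator of an event. *)

theory Defs
  imports "HOL-Probability.Probability"
begin

text \<open>Left-continuous generalized inverse of a distribution function F:
  Q(u) = inf {y. F y \<ge> u}.  (Used only for u in (0,1), where it is a finite real.)\<close>
definition quantile :: "(real \<Rightarrow> real) \<Rightarrow> real \<Rightarrow> real" where
  "quantile F u = Inf {y. F y \<ge> u}"

end

theory Submission
  imports Defs
begin


lemma slope_mono:
  fixes f :: "real \<Rightarrow> real"
  assumes cvx: "convex_on UNIV f" and "x < y" "x' < y'" "x \<le> x'" "y \<le> y'"
  shows "(f y - f x) / (y - x) \<le> (f y' - f x') / (y' - x')"
proof -
  have sw: "\<And>a b. (f a - f b) / (a - b) = (f b - f a) / (b - a)"
    by (metis minus_diff_eq minus_divide_divide)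
  have 1: "(f y - f x) / (y - x) \<le> (f y' - f x) / (y' - x)"
  proof (cases "y = y'")
    case False
    then have "y < y'" using assms by simp
    from convex_on_slope_le(1)[OF cvx UNIV_I UNIV_I \<open>x < y\<close> this] show ?thesis by (simp add: sw)
  qed simp
  have 2: "(f y' - f x) / (y' - x) \<le> (f y' - f x') / (y' - x')"
  proof (cases "x = x'")
    case False
    then have "x < x'" using assms by simp
    have "x' < y'" by fact
    from convex_on_slope_le(2)[OF cvx UNIV_I UNIV_I \<open>x < x'\<close> this] show ?thesis by (simp add: sw)
  qed simp
  from 1 2 show ?thesis by simp
qed

definition sl :: "(real \<Rightarrow> real) \<Rightarrow> nat \<Rightarrow> real \<Rightarrow> real" where
  "sl f n t = (f (t + 1 / real (Suc n)) - f t) / (1 / real (Suc n))"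

definition cderiv :: "(real \<Rightarrow> real) \<Rightarrow> real \<Rightarrow> real" where
  "cderiv f t = (INF n. sl f n t)"

lemma sl_as_slope: "sl f n t = (f (t + 1 / real (Suc n)) - f t) / ((t + 1 / real (Suc n)) - t)"
  by (simp add: sl_def)

lemma sl_dec:
  assumes cvx: "convex_on UNIV f"
  shows "sl f (Suc n) t \<le> sl f n t"
  unfolding sl_as_slope
  by (rule slope_mono[OF cvx]) (auto simp: frac_le)

lemma sl_lower:
  fixes t :: real
  assumes cvx: "convex_on UNIV f"
  shows "f t - f (t - 1) \<le> sl f n t"
proof -
  have "(f t - f (t - 1)) / (t - (t - 1)) \<le> sl f n t"
    unfolding sl_as_slope by (rule slope_mono[OF cvx]) auto
  then show ?thesis by simp
qed

lemma sl_mono: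
  assumes cvx: "convex_on UNIV f" and "t \<le> t'"
  shows "sl f n t \<le> sl f n t'"
  unfolding sl_as_slope
  by (rule slope_mono[OF cvx]) (use assms in auto)

lemma lower_mono:
  fixes t :: real
  assumes cvx: "convex_on UNIV f" and "t \<le> t'"
  shows "f t - f (t - 1) \<le> f t' - f (t' - 1)"
proof -
  have "(f t - f (t - 1)) / (t - (t - 1)) \<le> (f t' - f (t' - 1)) / (t' - (t' - 1))"
    by (rule slope_mono[OF cvx]) (use assms in auto)
  then show ?thesis by simp
qed

lemma sl_bdd: "convex_on UNIV f \<Longrightarrow> bdd_below (range (\<lambda>n. sl f n t))"
  using sl_lower by (metis bdd_belowI2)

lemma cderiv_le_sl: "convex_on UNIV f \<Longrightarrow> cderiv f t \<le> sl f n t"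
  unfolding cderiv_def by (rule cINF_lower[OF sl_bdd]) auto

lemma cderiv_lower: "convex_on UNIV f \<Longrightarrow> f t - f (t - 1) \<le> cderiv f t"
  unfolding cderiv_def by (rule cINF_greatest) (auto intro: sl_lower)

lemma cderiv_mono:
  assumes cvx: "convex_on UNIV f" shows "mono (cderiv f)"
proof (rule monoI)
  fix t t' :: real assume "t \<le> t'"
  show "cderiv f t \<le> cderiv f t'"
    unfolding cderiv_def[of f t']
    by (rule cINF_greatest) (auto intro: order_trans[OF cderiv_le_sl[OF cvx] sl_mono[OF cvx \<open>t \<le> t'\<close>]])
qed

lemma sl_lim: "convex_on UNIV f \<Longrightarrow> (\<lambda>n. sl f n t) \<longlonglongrightarrow> cderiv f t"
  unfolding cderiv_def
  by (rule LIMSEQ_decseq_INF[OF sl_bdd]) (auto intro: decseq_SucI sl_dec)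

lemma cderiv_nonneg:
  assumes "convex_on UNIV f" "mono f" shows "0 \<le> cderiv f t"
  unfolding cderiv_def
proof (rule cINF_greatest)
  fix n
  have "f t \<le> f (t + 1 / real (Suc n))" using assms(2) by (auto intro: monoD)
  then show "0 \<le> sl f n t" unfolding sl_def by simp
qed auto

lemma cderiv_nonpos:
  assumes "convex_on UNIV f" "antimono f" shows "cderiv f t \<le> 0"
proof -
  have "f (t + 1 / real (Suc 0)) \<le> f t" using assms(2) by (auto intro: antimonoD)
  then have "sl f 0 t \<le> 0" unfolding sl_def by simp
  with cderiv_le_sl[OF assms(1)] show ?thesis by (metis order_trans)
qed


lemma sl_le0: "convex_on UNIV f \<Longrightarrow> sl f n t \<le> sl f 0 t"
proof -
  assume c: "convex_on UNIV f"
  have "decseq (\<lambda>n. sl f n t)" by (rule decseq_SucI) (rule sl_dec[OF c])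
  then show ?thesis by (simp add: decseq_def)
qed

lemma convex_FTC:
  fixes f :: "real \<Rightarrow> real"
  assumes cvx: "convex_on UNIV f" and xy: "x \<le> y"
  shows "integrable lborel (\<lambda>t. indicator {x..y} t * cderiv f t)"
    and "(\<integral>t. indicator {x..y} t * cderiv f t \<partial>lborel) = f y - f x"
proof -
  have cont: "continuous_on UNIV f" by (rule convex_on_continuous[OF open_UNIV cvx])
  then have isc: "\<And>t. isCont f t" by (simp add: continuous_on_eq_continuous_at)
  have fmeas[measurable]: "f \<in> borel_measurable borel"
    using cont by (rule borel_measurable_continuous_onI)
  have dmeas[measurable]: "cderiv f \<in> borel_measurable borel"
    by (rule borel_measurable_mono[OF cderiv_mono[OF cvx]])
  obtain F where F0: "\<And>t. (F has_vector_derivative f t) (at t)"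
    using einterval_antiderivative[of "-\<infinity>" "\<infinity>" f] isc by auto
  have F: "\<And>t. (F has_real_derivative f t) (at t)"
    using F0 by (simp add: has_real_derivative_iff_has_vector_derivative)
  define h where "h n = 1 / real (Suc n)" for n
  have hpos: "h n > 0" for n by (simp add: h_def)
  have slh: "sl f n t = (f (t + h n) - f t) / h n" for n t by (simp add: sl_def h_def)
  have int_sl: "(\<integral>t. indicator {x..y} t * sl f n t \<partial>lborel)
      = (F (y + h n) - F y) / h n - (F (x + h n) - F x) / h n" for n
  proof -
    have d: "((\<lambda>s. (F (s + h n) - F s) / h n) has_real_derivative sl f n t) (at t)" for t
    proof -
      have "((\<lambda>s. F (s + h n)) has_real_derivative f (t + h n)) (at t)"
        using F[of "t + h n"] by (simp add: DERIV_shift)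
      from DERIV_cdivide[OF DERIV_diff[OF this F[of t]], of "h n"]
      show ?thesis unfolding slh .
    qed
    have c: "continuous_on {x..y} (sl f n)"
      unfolding slh
      by (intro continuous_at_imp_continuous_on ballI continuous_intros isCont_o2[OF _ isc]) (use hpos[of n] in auto)
    define G where "G s = (F (s + h n) - F s) / h n" for s
    have "(\<integral>t. indicator {x..y} t *\<^sub>R sl f n t \<partial>lborel) = G y - G x"
    proof (rule integral_FTC_atLeastAtMost[OF xy _ c])
      fix t assume "x \<le> t" "t \<le> y"
      show "(G has_vector_derivative sl f n t) (at t within {x..y})"
        using d[of t] unfolding G_def
        by (auto simp: has_real_derivative_iff_has_vector_derivative intro: has_vector_derivative_at_within)
    qed
    then have "(\<integral>t. indicator {x..y} t *\<^sub>R sl f n t \<partial>lborel) = (F (y + h n) - F y) / h n - (F (x + h n) - F x) / h n"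
      by (simp add: G_def)
    then show ?thesis by simp
  qed
  have hlim: "h \<longlonglongrightarrow> 0"
    using LIMSEQ_inverse_real_of_nat unfolding h_def by (simp add: inverse_eq_divide)
  have dq: "(\<lambda>n. (F (z + h n) - F z) / h n) \<longlonglongrightarrow> f z" for z
  proof -
    have "(\<lambda>k. (F (z + k) - F z) / k) \<midarrow>0\<rightarrow> f z" using F[of z] by (simp add: DERIV_def)
    then show ?thesis
      using LIMSEQ_SEQ_conv[of 0 "\<lambda>k. (F (z + k) - F z) / k" "f z"] hlim hpos
      by (metis less_irrefl)
  qed
  have lim1: "(\<lambda>n. \<integral>t. indicator {x..y} t * sl f n t \<partial>lborel) \<longlonglongrightarrow> f y - f x"
    unfolding int_sl by (intro tendsto_diff dq)
  define C where "C = \<bar>f x - f (x - 1)\<bar> + \<bar>sl f 0 y\<bar>"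
  have bnd: "norm (indicator {x..y} t * sl f n t) \<le> indicator {x..y} t * C" for n t
  proof (cases "t \<in> {x..y}")
    case True
    then have "f x - f (x - 1) \<le> sl f n t"
      using lower_mono[OF cvx, of x t] sl_lower[OF cvx, of t n] by auto
    moreover have "sl f n t \<le> sl f 0 y"
      using sl_le0[OF cvx, of n t] sl_mono[OF cvx, of t y 0] True by auto
    ultimately show ?thesis using True by (auto simp: C_def)
  qed simp
  have wint: "integrable lborel (\<lambda>t. indicator {x..y} t * C)"
    by (intro integrable_mult_left integrable_real_indicator) (auto simp: emeasure_lborel_Icc_eq)
  have lim2: "(\<lambda>n. \<integral>t. indicator {x..y} t * sl f n t \<partial>lborel) \<longlonglongrightarrow> (\<integral>t. indicator {x..y} t * cderiv f t \<partial>lborel)"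
    and intD: "integrable lborel (\<lambda>t. indicator {x..y} t * cderiv f t)"
  proof -
    have meas_s: "(\<lambda>t. indicator {x..y} t * sl f n t) \<in> borel_measurable lborel" for n
      unfolding sl_def by measurable
    have lim: "AE t in lborel. (\<lambda>n. indicator {x..y} t * sl f n t) \<longlonglongrightarrow> indicator {x..y} t * cderiv f t"
      by (intro AE_I2 tendsto_mult_left sl_lim[OF cvx])
    show "(\<lambda>n. \<integral>t. indicator {x..y} t * sl f n t \<partial>lborel) \<longlonglongrightarrow> (\<integral>t. indicator {x..y} t * cderiv f t \<partial>lborel)"
      by (rule integral_dominated_convergence[OF _ meas_s wint lim]) (use bnd in auto)
    show "integrable lborel (\<lambda>t. indicator {x..y} t * cderiv f t)"
      by (rule integrable_dominated_convergence[OF _ meas_s wint lim]) (use bnd in auto)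
  qed
  show "integrable lborel (\<lambda>t. indicator {x..y} t * cderiv f t)" by (rule intD)
  show "(\<integral>t. indicator {x..y} t * cderiv f t \<partial>lborel) = f y - f x"
    using LIMSEQ_unique[OF lim2 lim1] .
qed


lemma convex_FTC_shift:
  fixes f :: "real \<Rightarrow> real"
  assumes cvx: "convex_on UNIV f" and xy: "x \<le> y"
  shows "integrable lborel (\<lambda>t. indicator {x..<y} t * cderiv f (t - c))"
    and "(\<integral>t. indicator {x..<y} t * cderiv f (t - c) \<partial>lborel) = f (y - c) - f (x - c)"
proof -
  define g where "g s = indicator {x - c..y - c} s * cderiv f s" for s
  have gi: "integrable lborel g" unfolding g_def by (rule convex_FTC(1)[OF cvx]) (use xy in auto)
  have gv: "integral\<^sup>L lborel g = f (y - c) - f (x - c)" unfolding g_def by (rule convex_FTC(2)[OF cvx]) (use xy in auto)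
  have eq: "g (- c + 1 * t) = indicator {x..y} t * cderiv f (t - c)" for t
    by (simp add: g_def indicator_def)
  have i2: "integrable lborel (\<lambda>t. indicator {x..y} t * cderiv f (t - c))"
    using lborel_integrable_real_affine[OF gi, of 1 "-c"] by (simp only: eq)
  have v2: "(\<integral>t. indicator {x..y} t * cderiv f (t - c) \<partial>lborel) = f (y - c) - f (x - c)"
  proof -
    have "integral\<^sup>L lborel g = \<bar>1::real\<bar> *\<^sub>R (\<integral>t. g (- c + 1 * t) \<partial>lborel)"
      by (rule lborel_integral_real_affine) simp
    also have "\<dots> = (\<integral>t. indicator {x..y} t * cderiv f (t - c) \<partial>lborel)"
      by (simp only: eq) simp
    finally show ?thesis using gv by simp
  qed
  have ae: "AE t in lborel. indicator {x..y} t * cderiv f (t - c) = indicator {x..<y} t * cderiv f (t - c)"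
    using AE_lborel_singleton[of y] by eventually_elim (auto simp: indicator_def)
  have dm[measurable]: "cderiv f \<in> borel_measurable borel"
    by (rule borel_measurable_mono[OF cderiv_mono[OF cvx]])
  show "integrable lborel (\<lambda>t. indicator {x..<y} t * cderiv f (t - c))"
    by (rule integrable_cong_AE_imp[OF i2 _ ae]) measurable
  have "(\<integral>t. indicator {x..y} t * cderiv f (t - c) \<partial>lborel) = (\<integral>t. indicator {x..<y} t * cderiv f (t - c) \<partial>lborel)"
    by (rule integral_cong_AE[OF _ _ ae]) measurable
  then show "(\<integral>t. indicator {x..<y} t * cderiv f (t - c) \<partial>lborel) = f (y - c) - f (x - c)"
    using v2 by simp
qed




lemma quantile_le_iff:
  assumes N: "real_distribution N" and v: "0 < v" "v < 1"
  shows "quantile (cdf N) v \<le> t \<longleftrightarrow> v \<le> cdf N t"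
proof -
  interpret real_distribution N by fact
  define S where "S = {y. cdf N y \<ge> v}"
  have "\<forall>\<^sub>F y in at_top. cdf N y > v"
    using order_tendstoD(1)[OF cdf_lim_at_top_prob v(2)] .
  then obtain y1 where "cdf N y1 > v" by (auto simp: eventually_at_top_linorder)
  then have ne: "S \<noteq> {}" unfolding S_def by (metis empty_Collect_eq less_imp_le)
  have "\<forall>\<^sub>F y in at_bot. cdf N y < v"
    using order_tendstoD(2)[OF cdf_lim_at_bot v(1)] .
  then obtain y0 where y0: "\<And>y. y \<le> y0 \<Longrightarrow> cdf N y < v" by (auto simp: eventually_at_bot_linorder)
  have bdd: "bdd_below S"
  proof (rule bdd_belowI[of _ y0])
    fix x assume "x \<in> S"
    then have "\<not> cdf N x < v" by (simp add: S_def)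
    then show "y0 \<le> x" using y0[of x] by linarith
  qed
  have qS: "v \<le> cdf N (Inf S)"
  proof (rule ccontr)
    assume "\<not> v \<le> cdf N (Inf S)"
    then have lt: "cdf N (Inf S) < v" by simp
    have "\<forall>\<^sub>F y in at_right (Inf S). cdf N y < v"
      using cdf_is_right_cont[of "Inf S"] lt unfolding continuous_within
      by (rule order_tendstoD(2))
    then obtain d where d: "d > Inf S" "\<And>y. Inf S < y \<Longrightarrow> y < d \<Longrightarrow> cdf N y < v"
      by (auto simp: eventually_at_right_field)
    obtain y where y: "y \<in> S" "y < d" using cInf_less_iff[OF ne bdd] d(1) by auto
    have "Inf S \<le> y" using cInf_lower[OF y(1) bdd] .
    then show False
    proof (cases "Inf S = y")
      case True then show False using y(1) lt by (simp add: S_def)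
    next
      case False then have "Inf S < y" using \<open>Inf S \<le> y\<close> by simp
      then have "cdf N y < v" using d(2) y(2) by blast
      then show False using y(1) by (simp add: S_def)
    qed
  qed
  show ?thesis
  proof
    assume "quantile (cdf N) v \<le> t"
    then have "Inf S \<le> t" by (simp add: quantile_def S_def)
    then show "v \<le> cdf N t" using qS cdf_nondecreasing[of "Inf S" t] by linarith
  next
    assume "v \<le> cdf N t"
    then have "t \<in> S" by (simp add: S_def)
    then show "quantile (cdf N) v \<le> t" unfolding quantile_def S_def[symmetric] by (rule cInf_lower[OF _ bdd])
  qed
qed

lemma quantile_mono_on:
  assumes N: "real_distribution N"
  shows "mono_on {0<..<1} (quantile (cdf N))"
proof (rule mono_onI)
  fix u v :: real assume uv: "u \<in> {0<..<1}" "v \<in> {0<..<1}" "u \<le> v"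
  have "v \<le> cdf N (quantile (cdf N) v)" using quantile_le_iff[OF N, of v] uv by auto
  then have "u \<le> cdf N (quantile (cdf N) v)" using uv by linarith
  then show "quantile (cdf N) u \<le> quantile (cdf N) v" using quantile_le_iff[OF N, of u] uv by auto
qed

lemma quantile_measurable:
  assumes N: "real_distribution N"
  shows "quantile (cdf N) \<in> borel_measurable borel"
proof (rule borel_measurable_piecewise_mono[of "{{..0}, {0<..<1}, {1}, {1<..}}"])
  interpret real_distribution N by fact
  fix c :: "real set" assume "c \<in> {{..0}, {0<..<1}, {1}, {1<..}}"
  moreover have "mono_on {..0} (quantile (cdf N))"
  proof -
    have "{y. cdf N y \<ge> u} = UNIV" if "u \<le> 0" for u using that cdf_nonneg order_trans by blast
    then show ?thesis by (intro mono_onI) (simp add: quantile_def)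
  qed
  moreover have "mono_on {1<..} (quantile (cdf N))"
  proof -
    have "{y. cdf N y \<ge> u} = {}" if "u > 1" for u
    proof -
      have "cdf N y < u" for y using cdf_bounded_prob[of y] that by linarith
      then show ?thesis by (simp add: not_le)
    qed
    then show ?thesis by (intro mono_onI) (simp add: quantile_def)
  qed
  moreover have "mono_on {1} (quantile (cdf N))" by (rule mono_onI) simp
  ultimately show "mono_on c (quantile (cdf N))"
    using quantile_mono_on[OF N] by blast
next
  show "\<Union> {{..0}, {0<..<1}, {1}, {1<..}} = (UNIV :: real set)"
    by (auto simp: not_le) 
qed auto



lemma uniform_integral:
  fixes M :: "'a measure" and U :: "'a \<Rightarrow> real" and h :: "real \<Rightarrow> real"
  assumes U[measurable]: "U \<in> borel_measurable M"
    and dU: "distr M lborel U = uniform_measure lborel {0..1}"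
    and h[measurable]: "h \<in> borel_measurable borel" and S[measurable]: "S \<in> sets borel" and S01: "S \<subseteq> {0..1}"
  shows "integrable M (\<lambda>\<omega>. h (U \<omega>) * indicator S (U \<omega>)) \<longleftrightarrow> set_integrable lborel S h"
    and "(\<integral>\<omega>. h (U \<omega>) * indicator S (U \<omega>) \<partial>M) = (LINT u:S|lborel. h u)"
proof -
  have ud: "distr M lborel U = density lborel (\<lambda>x. ennreal (indicator {0..1} x))"
    unfolding dU uniform_measure_def by (simp add: ennreal_indicator divide_ennreal_def)
  have Ul: "U \<in> M \<rightarrow>\<^sub>M lborel" by simp
  have eq: "(\<lambda>x. indicator {0..1} x *\<^sub>R (h x * indicator S x)) = (\<lambda>x. indicator S x *\<^sub>R h x)"
    using S01 by (auto simp: indicator_def fun_eq_iff)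
  have "integrable M (\<lambda>\<omega>. h (U \<omega>) * indicator S (U \<omega>)) \<longleftrightarrow> integrable (distr M lborel U) (\<lambda>u. h u * indicator S u)"
    by (rule integrable_distr_eq[OF Ul, symmetric]) simp
  also have "\<dots> \<longleftrightarrow> integrable lborel (\<lambda>x. indicator {0..1} x *\<^sub>R (h x * indicator S x))"
    unfolding ud by (rule integrable_density) auto
  also have "\<dots> \<longleftrightarrow> set_integrable lborel S h"
    unfolding eq set_integrable_def ..
  finally show "integrable M (\<lambda>\<omega>. h (U \<omega>) * indicator S (U \<omega>)) \<longleftrightarrow> set_integrable lborel S h" .
  have "(\<integral>\<omega>. h (U \<omega>) * indicator S (U \<omega>) \<partial>M) = integral\<^sup>L (distr M lborel U) (\<lambda>u. h u * indicator S u)"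
    by (rule integral_distr[OF Ul, symmetric]) simp
  also have "\<dots> = integral\<^sup>L lborel (\<lambda>x. indicator {0..1} x *\<^sub>R (h x * indicator S x))"
    unfolding ud by (rule integral_density) auto
  also have "\<dots> = (LINT u:S|lborel. h u)"
    unfolding eq set_lebesgue_integral_def ..
  finally show "(\<integral>\<omega>. h (U \<omega>) * indicator S (U \<omega>) \<partial>M) = (LINT u:S|lborel. h u)" .
qed

lemma uniform_prob:
  fixes M :: "'a measure" and U :: "'a \<Rightarrow> real"
  assumes U[measurable]: "U \<in> borel_measurable M"
    and dU: "distr M lborel U = uniform_measure lborel {0..1}"
    and X: "X \<in> sets borel" "X \<subseteq> {0..1}"
  shows "measure M {\<omega> \<in> space M. U \<omega> \<in> X} = measure lborel X"
proof -
  have Ul: "U \<in> M \<rightarrow>\<^sub>M lborel" by simp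
  have "measure M {\<omega> \<in> space M. U \<omega> \<in> X} = measure (distr M lborel U) X"
    using X by (subst measure_distr[OF Ul]) (auto simp: vimage_def Int_def conj_commute)
  also have "\<dots> = measure lborel X"
    unfolding dU using X by (subst measure_uniform_measure) (auto simp: Int_absorb1)
  finally show ?thesis .
qed



lemma inner_pattern:
  fixes M :: "'a measure" and k W :: "'a \<Rightarrow> real"
  assumes "prob_space M"
    and meas[measurable]: "Measurable.pred M E" "Measurable.pred M P" "Measurable.pred M R"
    and kE: "\<And>\<omega>. \<omega> \<in> space M \<Longrightarrow> E \<omega> \<Longrightarrow> P \<omega> \<Longrightarrow> k \<omega> = (if R \<omega> then 0 else W \<omega>)"
    and kN: "\<And>\<omega>. \<omega> \<in> space M \<Longrightarrow> E \<omega> \<Longrightarrow> \<not> P \<omega> \<Longrightarrow> k \<omega> = (if R \<omega> then - W \<omega> else 0)"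
    and k0: "\<And>\<omega>. \<omega> \<in> space M \<Longrightarrow> \<not> E \<omega> \<Longrightarrow> k \<omega> = 0"
    and W0: "\<And>\<omega>. \<omega> \<in> space M \<Longrightarrow> E \<omega> \<Longrightarrow> 0 \<le> W \<omega>"
    and sep: "\<And>\<omega> \<omega>'. \<omega> \<in> space M \<Longrightarrow> \<omega>' \<in> space M \<Longrightarrow> E \<omega> \<Longrightarrow> E \<omega>' \<Longrightarrow> P \<omega> \<Longrightarrow> \<not> P \<omega>' \<Longrightarrow> W \<omega>' \<le> W \<omega>"
    and pr: "measure M {\<omega> \<in> space M. E \<omega> \<and> R \<omega>} \<le> measure M {\<omega> \<in> space M. E \<omega> \<and> P \<omega>}"
  shows "0 \<le> integral\<^sup>L M k"
proof (cases "integrable M k")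
  case False then show ?thesis by (simp add: not_integrable_integral_eq)
next
  case kint: True
  interpret prob_space M by fact
  show ?thesis
  proof (cases "\<exists>\<omega>0 \<in> space M. E \<omega>0 \<and> P \<omega>0")
    case True
    define T where "T = W ` {\<omega> \<in> space M. E \<omega> \<and> P \<omega>}"
    define m where "m = Inf T"
    have Tne: "T \<noteq> {}" using True by (auto simp: T_def)
    have Tb: "bdd_below T" unfolding T_def by (rule bdd_belowI[of _ 0]) (auto intro: W0)
    have m0: "0 \<le> m" unfolding m_def by (rule cInf_greatest[OF Tne]) (auto simp: T_def intro: W0)
    have mP: "m \<le> W \<omega>" if "\<omega> \<in> space M" "E \<omega>" "P \<omega>" for \<omega>
      unfolding m_def by (rule cInf_lower[OF _ Tb]) (use that in \<open>auto simp: T_def\<close>)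
    have mN: "W \<omega> \<le> m" if "\<omega> \<in> space M" "E \<omega>" "\<not> P \<omega>" for \<omega>
      unfolding m_def by (rule cInf_greatest[OF Tne]) (use that sep in \<open>auto simp: T_def\<close>)
    define A1 where "A1 = {\<omega> \<in> space M. E \<omega> \<and> P \<omega>}"
    define A2 where "A2 = {\<omega> \<in> space M. E \<omega> \<and> R \<omega>}"
    have [measurable]: "A1 \<in> sets M" "A2 \<in> sets M" unfolding A1_def A2_def by measurable
    have lowb: "m * (indicator A1 \<omega> - indicator A2 \<omega>) \<le> k \<omega>" if "\<omega> \<in> space M" for \<omega>
    proof (cases "E \<omega>")
      case False then show ?thesis using that k0 by (simp add: A1_def A2_def)
    next
      case True
      show ?thesis
      proof (cases "P \<omega>")
        case True
        then show ?thesis using \<open>E \<omega>\<close> that kE[OF that] mP[OF that] by (auto simp: A1_def A2_def)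
      next
        case False
        then show ?thesis using \<open>E \<omega>\<close> that kN[OF that] mN[OF that] by (auto simp: A1_def A2_def)
      qed
    qed
    have i1: "integrable M (indicator A1 :: _ \<Rightarrow> real)" "integrable M (indicator A2 :: _ \<Rightarrow> real)"
      by (auto intro!: integrable_real_indicator simp: less_top[symmetric])
    have "(\<integral>\<omega>. indicator A1 \<omega> - indicator A2 \<omega> \<partial>M) = prob A1 - prob A2"
      using Bochner_Integration.integral_diff[OF i1] by simp
    then have "m * (prob A1 - prob A2) = (\<integral>\<omega>. m * (indicator A1 \<omega> - indicator A2 \<omega>) \<partial>M)"
      by simp
    also have "\<dots> \<le> integral\<^sup>L M k"
      by (rule integral_mono[OF _ kint]) (use i1 lowb in auto)
    moreover have "0 \<le> m * (prob A1 - prob A2)"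
      using m0 pr unfolding A1_def[symmetric] A2_def[symmetric] by (intro mult_nonneg_nonneg) auto
    ultimately show ?thesis by linarith
  next
    case False
    then have "{\<omega> \<in> space M. E \<omega> \<and> P \<omega>} = {}" by auto
    with pr have "measure M {\<omega> \<in> space M. E \<omega> \<and> R \<omega>} = 0" using measure_nonneg[of M] by (simp add: order_antisym)
    then have "AE \<omega> in M. \<not> (E \<omega> \<and> R \<omega>)"
      by (subst AE_iff_measurable[OF _ refl]) (auto simp: emeasure_eq_measure)
    then have "AE \<omega> in M. k \<omega> = 0"
      using AE_space
    proof eventually_elim
      case (elim \<omega>) then show ?case using False kN k0 by (cases "E \<omega>") auto
    qed
    then have "integral\<^sup>L M k = 0" by (simp add: integral_eq_zero_AE)
    then show ?thesis by simp
  qed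
qed

lemma core_fubini:
  fixes M :: "'a measure" and K :: "'a \<Rightarrow> real \<Rightarrow> real" and H :: "'a \<Rightarrow> real"
  assumes "prob_space M"
    and Kmeas: "(\<lambda>(\<omega>, t). K \<omega> t) \<in> borel_measurable (M \<Otimes>\<^sub>M lborel)"
    and Hint: "integrable M H"
    and Kint: "AE \<omega> in M. integrable lborel (K \<omega>)"
    and Kabs: "AE \<omega> in M. (\<integral>t. norm (K \<omega> t) \<partial>lborel) = norm (H \<omega>)"
    and KH: "AE \<omega> in M. (\<integral>t. K \<omega> t \<partial>lborel) = H \<omega>"
    and inner: "\<And>t. 0 \<le> (\<integral>\<omega>. K \<omega> t \<partial>M)"
  shows "0 \<le> integral\<^sup>L M H"
proof -
  interpret prob_space M by fact
  interpret pair_sigma_finite M lborel ..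
  have Kn: "(\<lambda>(\<omega>, t). norm (K \<omega> t)) \<in> borel_measurable (M \<Otimes>\<^sub>M lborel)"
  proof -
    have eq: "(\<lambda>(\<omega>, t). norm (K \<omega> t)) = (\<lambda>x. norm ((\<lambda>(\<omega>, t). K \<omega> t) x))" by auto
    show ?thesis unfolding eq by (rule measurable_compose[OF Kmeas borel_measurable_norm])
  qed
  have m1: "(\<lambda>\<omega>. \<integral>t. norm (K \<omega> t) \<partial>lborel) \<in> borel_measurable M"
    by (rule lborel.borel_measurable_lebesgue_integral[OF Kn])
  have m2: "(\<lambda>\<omega>. \<integral>t. K \<omega> t \<partial>lborel) \<in> borel_measurable M"
    by (rule lborel.borel_measurable_lebesgue_integral[OF Kmeas])
  have i1: "integrable M (\<lambda>\<omega>. \<integral>t. norm (K \<omega> t) \<partial>lborel)"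
    by (rule integrable_cong_AE_imp[OF integrable_norm[OF Hint] m1]) (use Kabs in \<open>auto elim: AE_mp\<close>)
  have iK: "integrable (M \<Otimes>\<^sub>M lborel) (\<lambda>(\<omega>, t). K \<omega> t)"
    by (rule Fubini_integrable[OF Kmeas]) (use i1 Kint in simp_all)
  have "integral\<^sup>L M H = (\<integral>\<omega>. (\<integral>t. K \<omega> t \<partial>lborel) \<partial>M)"
    by (rule integral_cong_AE[OF _ m2]) (use Hint KH in \<open>auto simp: eq_commute elim: AE_mp\<close>)
  also have "\<dots> = (\<integral>t. (\<integral>\<omega>. K \<omega> t \<partial>M) \<partial>lborel)"
    using Fubini_integral[OF iK] by simp
  also have "\<dots> \<ge> 0" by (rule Bochner_Integration.integral_nonneg) (rule inner)
  finally show ?thesis .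
qed



lemma abs_integral_const_sign:
  fixes g :: "real \<Rightarrow> real"
  assumes "integrable lborel g" and s: "(\<forall>t. 0 \<le> g t) \<or> (\<forall>t. g t \<le> 0)"
  shows "(\<integral>t. norm (g t) \<partial>lborel) = norm (\<integral>t. g t \<partial>lborel)"
  using s
proof
  assume p: "\<forall>t. 0 \<le> g t"
  then have "(\<lambda>t. norm (g t)) = g" by auto
  moreover have "0 \<le> (\<integral>t. g t \<partial>lborel)" using p by (intro Bochner_Integration.integral_nonneg) auto
  ultimately show ?thesis by simp
next
  assume p: "\<forall>t. g t \<le> 0"
  then have "(\<lambda>t. norm (g t)) = (\<lambda>t. - g t)" by (intro ext) (simp add: abs_of_nonpos)
  moreover have "0 \<le> (\<integral>t. - g t \<partial>lborel)" using p by (intro Bochner_Integration.integral_nonneg) auto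
  ultimately show ?thesis by simp
qed

lemma ftc_pair:
  fixes \<phi> :: "real \<Rightarrow> real" and x y c :: real
  assumes cvx: "convex_on UNIV \<phi>" and sg: "(\<forall>t. 0 \<le> cderiv \<phi> t) \<or> (\<forall>t. cderiv \<phi> t \<le> 0)"
  defines "k \<equiv> \<lambda>t. ((if x \<le> t \<and> t < y then 1 else 0) - (if y \<le> t \<and> t < x then 1 else 0)) * cderiv \<phi> (t - c)"
  shows "integrable lborel k" and "(\<integral>t. k t \<partial>lborel) = \<phi> (y - c) - \<phi> (x - c)"
    and "(\<integral>t. norm (k t) \<partial>lborel) = norm (\<phi> (y - c) - \<phi> (x - c))"
proof -
  have A: "integrable lborel k \<and> (\<integral>t. k t \<partial>lborel) = \<phi> (y - c) - \<phi> (x - c)"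
  proof (cases "x \<le> y")
    case True
    then have "k = (\<lambda>t. indicator {x..<y} t * cderiv \<phi> (t - c))"
      by (auto simp: k_def indicator_def fun_eq_iff)
    then show ?thesis using convex_FTC_shift[OF cvx True, of c] by simp
  next
    case False
    then have le: "y \<le> x" by simp
    have "k = (\<lambda>t. - (indicator {y..<x} t * cderiv \<phi> (t - c)))"
      using False by (auto simp: k_def indicator_def fun_eq_iff)
    then show ?thesis using convex_FTC_shift[OF cvx le, of c] by simp
  qed
  then show "integrable lborel k" and "(\<integral>t. k t \<partial>lborel) = \<phi> (y - c) - \<phi> (x - c)" by auto
  have "(\<forall>t. 0 \<le> k t) \<or> (\<forall>t. k t \<le> 0)" if "x \<le> y"
    using sg that by (auto simp: k_def)
  have s: "(\<forall>t. 0 \<le> k t) \<or> (\<forall>t. k t \<le> 0)"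
  proof (cases "x \<le> y")
    case True
    then show ?thesis using sg by (auto simp: k_def)
  next
    case False
    then show ?thesis using sg by (auto simp: k_def mult_le_0_iff)
  qed
  show "(\<integral>t. norm (k t) \<partial>lborel) = norm (\<phi> (y - c) - \<phi> (x - c))"
    using abs_integral_const_sign[OF _ s] A by simp
qed

lemma main_generic:
  fixes M :: "'a measure" and U Y :: "'a \<Rightarrow> real" and \<phi> q r :: "real \<Rightarrow> real" and \<sigma> :: real
  assumes "prob_space M"
    and [measurable]: "U \<in> borel_measurable M" "Y \<in> borel_measurable M"
    and [measurable]: "q \<in> borel_measurable borel" "r \<in> borel_measurable borel"
    and cvx: "convex_on UNIV \<phi>" and sg: "(\<forall>t. 0 \<le> cderiv \<phi> t) \<or> (\<forall>t. cderiv \<phi> t \<le> 0)"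
    and Hint: "integrable M (\<lambda>\<omega>. \<sigma> * (indicator S (U \<omega>) * (\<phi> (Y \<omega> - q (U \<omega>)) - \<phi> (r (U \<omega>) - q (U \<omega>)))))"
    and S[measurable]: "S \<in> sets borel"
    and inner: "\<And>t. 0 \<le> (\<integral>\<omega>. \<sigma> * (indicator S (U \<omega>) * (((if r (U \<omega>) \<le> t \<and> t < Y \<omega> then 1 else 0)
          - (if Y \<omega> \<le> t \<and> t < r (U \<omega>) then 1 else 0)) * cderiv \<phi> (t - q (U \<omega>)))) \<partial>M)"
  shows "0 \<le> (\<integral>\<omega>. \<sigma> * (indicator S (U \<omega>) * (\<phi> (Y \<omega> - q (U \<omega>)) - \<phi> (r (U \<omega>) - q (U \<omega>)))) \<partial>M)"
proof -
  define K where "K \<omega> t = \<sigma> * (indicator S (U \<omega>) * (((if r (U \<omega>) \<le> t \<and> t < Y \<omega> then 1 else 0)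
          - (if Y \<omega> \<le> t \<and> t < r (U \<omega>) then 1 else 0)) * cderiv \<phi> (t - q (U \<omega>))))" for \<omega> t
  have dm[measurable]: "cderiv \<phi> \<in> borel_measurable borel"
    by (rule borel_measurable_mono[OF cderiv_mono[OF cvx]])
  have Kmeas: "(\<lambda>(\<omega>, t). K \<omega> t) \<in> borel_measurable (M \<Otimes>\<^sub>M lborel)"
    unfolding K_def by measurable
  note fp = ftc_pair[OF cvx sg, of "r (U \<omega>)" "Y \<omega>" "q (U \<omega>)" for \<omega>]
  have Kdef2: "K \<omega> = (\<lambda>t. \<sigma> * indicator S (U \<omega>) * (((if r (U \<omega>) \<le> t \<and> t < Y \<omega> then 1 else 0)
          - (if Y \<omega> \<le> t \<and> t < r (U \<omega>) then 1 else 0)) * cderiv \<phi> (t - q (U \<omega>))))" for \<omega>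
    by (auto simp: K_def fun_eq_iff)
  show ?thesis
  proof (rule core_fubini[OF \<open>prob_space M\<close> Kmeas Hint])
    show "AE \<omega> in M. integrable lborel (K \<omega>)"
      unfolding Kdef2 by (intro AE_I2 integrable_mult_right fp(1))
    show "AE \<omega> in M. (\<integral>t. K \<omega> t \<partial>lborel) = \<sigma> * (indicator S (U \<omega>) * (\<phi> (Y \<omega> - q (U \<omega>)) - \<phi> (r (U \<omega>) - q (U \<omega>))))"
      unfolding Kdef2 by (intro AE_I2) (simp add: fp(2))
    show "AE \<omega> in M. (\<integral>t. norm (K \<omega> t) \<partial>lborel) = norm (\<sigma> * (indicator S (U \<omega>) * (\<phi> (Y \<omega> - q (U \<omega>)) - \<phi> (r (U \<omega>) - q (U \<omega>)))))"
    proof (intro AE_I2)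
      fix \<omega>
      have "(\<lambda>t. norm (K \<omega> t)) = (\<lambda>t. norm (\<sigma> * indicator S (U \<omega>)) * norm (((if r (U \<omega>) \<le> t \<and> t < Y \<omega> then 1 else 0)
          - (if Y \<omega> \<le> t \<and> t < r (U \<omega>) then 1 else 0)) * cderiv \<phi> (t - q (U \<omega>))))"
        unfolding Kdef2 by (simp add: fun_eq_iff abs_mult)
      then show "(\<integral>t. norm (K \<omega> t) \<partial>lborel) = norm (\<sigma> * (indicator S (U \<omega>) * (\<phi> (Y \<omega> - q (U \<omega>)) - \<phi> (r (U \<omega>) - q (U \<omega>)))))"
        using fp(3)[of \<omega>] by (simp add: abs_mult)
    qed
    show "0 \<le> (\<integral>\<omega>. K \<omega> t \<partial>M)" for t unfolding K_def by (rule inner)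
  qed
qed



lemma convex_measurable: "convex_on UNIV (\<phi>::real\<Rightarrow>real) \<Longrightarrow> \<phi> \<in> borel_measurable borel"
  by (rule borel_measurable_continuous_onI[OF convex_on_continuous[OF open_UNIV]])

locale lsetup =
  fixes M :: "'a measure" and Y0 Y1 U :: "'a \<Rightarrow> real" and a b :: real
  assumes PS: "prob_space M"
    and m0[measurable]: "Y0 \<in> borel_measurable M"
    and m1[measurable]: "Y1 \<in> borel_measurable M"
    and mU[measurable]: "U \<in> borel_measurable M"
    and dU: "distr M lborel U = uniform_measure lborel {0..1}"
    and ae: "AE \<omega> in M. Y0 \<omega> = quantile (cdf (distr M borel Y0)) (U \<omega>)"
    and a0: "0 \<le> a" and ab: "a < b" and b1: "b \<le> 1"
begin

abbreviation "Q0 \<equiv> quantile (cdf (distr M borel Y0))"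
abbreviation "F1 \<equiv> cdf (distr M borel Y1)"
abbreviation "Q1 \<equiv> quantile F1"
abbreviation "Sab \<equiv> {a<..<b}"

lemma RD0: "real_distribution (distr M borel Y0)"
  using prob_space.real_distribution_distr[OF PS m0] .
lemma RD1: "real_distribution (distr M borel Y1)"
  using prob_space.real_distribution_distr[OF PS m1] .

lemma Q0meas[measurable]: "Q0 \<in> borel_measurable borel" by (rule quantile_measurable[OF RD0])
lemma Q1meas[measurable]: "Q1 \<in> borel_measurable borel" by (rule quantile_measurable[OF RD1])

lemma Q0mono: "u \<in> Sab \<Longrightarrow> v \<in> Sab \<Longrightarrow> u \<le> v \<Longrightarrow> Q0 u \<le> Q0 v"
  using quantile_mono_on[OF RD0] a0 b1 by (auto intro: mono_onD)

lemma gal1: "0 < v \<Longrightarrow> v < 1 \<Longrightarrow> Q1 v \<le> t \<longleftrightarrow> v \<le> F1 t"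
  by (rule quantile_le_iff[OF RD1])

lemma F1_eq: "F1 t = measure M {\<omega> \<in> space M. Y1 \<omega> \<le> t}"
  unfolding cdf_def by (subst measure_distr) (auto simp: vimage_def Int_def conj_commute)

lemma F1_bounds: "0 \<le> F1 t" "F1 t \<le> 1"
proof -
  interpret real_distribution "distr M borel Y1" by (rule RD1)
  show "0 \<le> F1 t" "F1 t \<le> 1" using cdf_nonneg cdf_bounded_prob by auto
qed

lemma probI: "I \<in> sets borel \<Longrightarrow> measure M {\<omega> \<in> space M. U \<omega> \<in> Sab \<and> U \<omega> \<in> I} = measure lborel (Sab \<inter> I)"
proof -
  assume I: "I \<in> sets borel"
  have "Sab \<inter> I \<subseteq> {0..1}" using a0 b1 by auto
  from uniform_prob[OF mU dU _ this] I show ?thesis by (simp add: Int_def conj_assoc)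
qed

lemma PE: "measure M {\<omega> \<in> space M. U \<omega> \<in> Sab} = b - a"
proof -
  have "Sab \<subseteq> {0..1}" using a0 b1 by auto
  from uniform_prob[OF mU dU _ this] ab show ?thesis by simp
qed

lemma probR1: "measure M {\<omega> \<in> space M. U \<omega> \<in> Sab \<and> Y1 \<omega> \<le> t} \<le> min (b - a) (F1 t)"
proof -
  interpret prob_space M by (rule PS)
  have "measure M {\<omega> \<in> space M. U \<omega> \<in> Sab \<and> Y1 \<omega> \<le> t} \<le> measure M {\<omega> \<in> space M. U \<omega> \<in> Sab}"
    by (rule finite_measure_mono) auto
  moreover have "measure M {\<omega> \<in> space M. U \<omega> \<in> Sab \<and> Y1 \<omega> \<le> t} \<le> measure M {\<omega> \<in> space M. Y1 \<omega> \<le> t}"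
    by (rule finite_measure_mono) auto
  ultimately show ?thesis using PE F1_eq[of t] by simp
qed

lemma probR2: "measure M {\<omega> \<in> space M. U \<omega> \<in> Sab \<and> t < Y1 \<omega>} \<le> min (b - a) (1 - F1 t)"
proof -
  interpret prob_space M by (rule PS)
  have "measure M {\<omega> \<in> space M. U \<omega> \<in> Sab \<and> t < Y1 \<omega>} \<le> measure M {\<omega> \<in> space M. U \<omega> \<in> Sab}"
    by (rule finite_measure_mono) auto
  moreover have "measure M {\<omega> \<in> space M. U \<omega> \<in> Sab \<and> t < Y1 \<omega>} \<le> measure M {\<omega> \<in> space M. t < Y1 \<omega>}"
    by (rule finite_measure_mono) auto
  moreover have "measure M {\<omega> \<in> space M. t < Y1 \<omega>} = 1 - F1 t"
  proof -
    have "{\<omega> \<in> space M. t < Y1 \<omega>} = space M - {\<omega> \<in> space M. Y1 \<omega> \<le> t}" by auto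
    then show ?thesis using F1_eq[of t] prob_compl[of "{\<omega> \<in> space M. Y1 \<omega> \<le> t}"] by simp
  qed
  ultimately show ?thesis using PE by simp
qed

lemma part:
  fixes \<phi> r :: "real \<Rightarrow> real" and \<sigma> :: real
  assumes cvx: "convex_on UNIV \<phi>" and sg: "(\<forall>t. 0 \<le> cderiv \<phi> t) \<or> (\<forall>t. cderiv \<phi> t \<le> 0)"
    and rm[measurable]: "r \<in> borel_measurable borel"
    and intL: "set_integrable lborel Sab (\<lambda>u. \<phi> (r u - Q0 u))"
    and intE: "integrable M (\<lambda>\<omega>. \<phi> (Y1 \<omega> - Y0 \<omega>) * indicator Sab (U \<omega>))"
    and inner: "\<And>t. 0 \<le> (\<integral>\<omega>. \<sigma> * (indicator Sab (U \<omega>) * (((if r (U \<omega>) \<le> t \<and> t < Y1 \<omega> then 1 else 0)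
          - (if Y1 \<omega> \<le> t \<and> t < r (U \<omega>) then 1 else 0)) * cderiv \<phi> (t - Q0 (U \<omega>)))) \<partial>M)"
  shows "0 \<le> \<sigma> * ((\<integral>\<omega>. \<phi> (Y1 \<omega> - Y0 \<omega>) * indicator Sab (U \<omega>) \<partial>M) - (LINT u:Sab|lborel. \<phi> (r u - Q0 u)))"
proof -
  interpret prob_space M by (rule PS)
  have [measurable]: "\<phi> \<in> borel_measurable borel" by (rule convex_measurable[OF cvx])
  have S01: "Sab \<subseteq> {0..1}" using a0 b1 by auto
  have hm: "(\<lambda>u. \<phi> (r u - Q0 u)) \<in> borel_measurable borel" by measurable
  have Bint: "integrable M (\<lambda>\<omega>. \<phi> (r (U \<omega>) - Q0 (U \<omega>)) * indicator Sab (U \<omega>))"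
    using uniform_integral(1)[OF mU dU hm _ S01] intL by simp
  have Bval: "(\<integral>\<omega>. \<phi> (r (U \<omega>) - Q0 (U \<omega>)) * indicator Sab (U \<omega>) \<partial>M) = (LINT u:Sab|lborel. \<phi> (r u - Q0 u))"
    using uniform_integral(2)[OF mU dU hm _ S01] by simp
  define H where "H \<omega> = \<sigma> * (indicator Sab (U \<omega>) * (\<phi> (Y1 \<omega> - Q0 (U \<omega>)) - \<phi> (r (U \<omega>) - Q0 (U \<omega>))))" for \<omega>
  define G where "G \<omega> = \<sigma> * (\<phi> (Y1 \<omega> - Y0 \<omega>) * indicator Sab (U \<omega>) - \<phi> (r (U \<omega>) - Q0 (U \<omega>)) * indicator Sab (U \<omega>))" for \<omega>
  have aeH: "AE \<omega> in M. G \<omega> = H \<omega>"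
    using ae by eventually_elim (simp add: G_def H_def algebra_simps)
  have Gint: "integrable M G" unfolding G_def using intE Bint by auto
  have Hm: "H \<in> borel_measurable M" unfolding H_def by measurable
  have Hint: "integrable M H" by (rule integrable_cong_AE_imp[OF Gint Hm aeH])
  have "0 \<le> integral\<^sup>L M H"
    unfolding H_def
    by (rule main_generic[OF PS mU m1 Q0meas rm cvx sg Hint[unfolded H_def] _ inner]) simp
  also have "integral\<^sup>L M H = integral\<^sup>L M G"
    by (rule integral_cong_AE[OF Hm]) (use aeH Gint in \<open>auto elim: AE_mp\<close>)
  also have "\<dots> = \<sigma> * ((\<integral>\<omega>. \<phi> (Y1 \<omega> - Y0 \<omega>) * indicator Sab (U \<omega>) \<partial>M) - (LINT u:Sab|lborel. \<phi> (r u - Q0 u)))"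
    unfolding G_def Bval[symmetric] using intE Bint by simp
  finally show ?thesis .
qed

end



lemma mIic: "a < b \<Longrightarrow> 0 \<le> F \<Longrightarrow> min (b - a) F \<le> measure lborel ({a<..<b} \<inter> {..a + F})"
proof (cases "b \<le> a + F")
  case True
  assume "a < b" "0 \<le> F"
  then have "{a<..<b} \<inter> {..a + F} = {a<..<b}" using True by auto
  then show ?thesis using \<open>a < b\<close> by simp
next
  case False
  assume "a < b" "0 \<le> F"
  then have "{a<..<b} \<inter> {..a + F} = {a<..a + F}" using False by auto
  then show ?thesis using \<open>0 \<le> F\<close> by simp
qed

lemma mIio: "a < b \<Longrightarrow> 0 \<le> F \<Longrightarrow> min (b - a) F \<le> measure lborel ({a<..<b} \<inter> {..<a + F})"
proof (cases "b \<le> a + F")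
  case True
  assume "a < b" "0 \<le> F"
  then have "{a<..<b} \<inter> {..<a + F} = {a<..<b}" using True by auto
  then show ?thesis using \<open>a < b\<close> by simp
next
  case False
  assume "a < b" "0 \<le> F"
  then have "{a<..<b} \<inter> {..<a + F} = {a<..<a + F}" using False by auto
  then show ?thesis using \<open>0 \<le> F\<close> by simp
qed

lemma mIoi: "a < b \<Longrightarrow> 0 \<le> F \<Longrightarrow> min (b - a) F \<le> measure lborel ({a<..<b} \<inter> {b - F<..})"
proof (cases "b - F \<le> a")
  case True
  assume "a < b" "0 \<le> F"
  then have "{a<..<b} \<inter> {b - F<..} = {a<..<b}" using True by auto
  then show ?thesis using \<open>a < b\<close> by simp
next
  case False
  assume "a < b" "0 \<le> F"
  then have "{a<..<b} \<inter> {b - F<..} = {b - F<..<b}" using False by auto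
  then show ?thesis using \<open>0 \<le> F\<close> by simp
qed

lemma mIci: "a < b \<Longrightarrow> 0 \<le> F \<Longrightarrow> min (b - a) F \<le> measure lborel ({a<..<b} \<inter> {b - F..})"
proof (cases "b - F \<le> a")
  case True
  assume "a < b" "0 \<le> F"
  then have "{a<..<b} \<inter> {b - F..} = {a<..<b}" using True by auto
  then show ?thesis using \<open>a < b\<close> by simp
next
  case False
  assume "a < b" "0 \<le> F"
  then have "{a<..<b} \<inter> {b - F..} = {b - F..<b}" using False by auto
  then show ?thesis using \<open>0 \<le> F\<close> by simp
qed

context lsetup
begin

lemma partLf:
  fixes f :: "real \<Rightarrow> real"
  assumes mf: "mono f" and cvx: "convex_on UNIV f"
    and intL: "set_integrable lborel Sab (\<lambda>u. f (Q1 (u - a) - Q0 u))"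
    and intE: "integrable M (\<lambda>\<omega>. f (Y1 \<omega> - Y0 \<omega>) * indicator Sab (U \<omega>))"
  shows "(LINT u:Sab|lborel. f (Q1 (u - a) - Q0 u)) \<le> (\<integral>\<omega>. f (Y1 \<omega> - Y0 \<omega>) * indicator Sab (U \<omega>) \<partial>M)"
proof -
  have D0: "\<forall>t. 0 \<le> cderiv f t" using cderiv_nonneg[OF cvx mf] by auto
  have Dm: "mono (cderiv f)" by (rule cderiv_mono[OF cvx])
  have gal: "Q1 (u - a) \<le> t \<longleftrightarrow> u \<le> a + F1 t" if "u \<in> Sab" for u t
    using gal1[of "u - a" t] that a0 b1 by auto
  have "0 \<le> 1 * ((\<integral>\<omega>. f (Y1 \<omega> - Y0 \<omega>) * indicator Sab (U \<omega>) \<partial>M) - (LINT u:Sab|lborel. f (Q1 (u - a) - Q0 u)))"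
  proof (rule part[OF cvx _ _ intL intE])
    show "(\<forall>t. 0 \<le> cderiv f t) \<or> (\<forall>t. cderiv f t \<le> 0)" using D0 by simp
    show "(\<lambda>u. Q1 (u - a)) \<in> borel_measurable borel" by measurable
    fix t
    show "0 \<le> (\<integral>\<omega>. 1 * (indicator Sab (U \<omega>) * (((if Q1 (U \<omega> - a) \<le> t \<and> t < Y1 \<omega> then 1 else 0)
          - (if Y1 \<omega> \<le> t \<and> t < Q1 (U \<omega> - a) then 1 else 0)) * cderiv f (t - Q0 (U \<omega>)))) \<partial>M)"
    proof (rule inner_pattern[OF PS, where E = "\<lambda>\<omega>. U \<omega> \<in> Sab" and P = "\<lambda>\<omega>. U \<omega> \<in> {..a + F1 t}"
          and R = "\<lambda>\<omega>. Y1 \<omega> \<le> t" and W = "\<lambda>\<omega>. cderiv f (t - Q0 (U \<omega>))"])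
      show "Measurable.pred M (\<lambda>\<omega>. U \<omega> \<in> Sab)" "Measurable.pred M (\<lambda>\<omega>. U \<omega> \<in> {..a + F1 t})"
        "Measurable.pred M (\<lambda>\<omega>. Y1 \<omega> \<le> t)" by measurable
      fix \<omega> assume \<omega>: "\<omega> \<in> space M"
      { assume E: "U \<omega> \<in> Sab" and P: "U \<omega> \<in> {..a + F1 t}"
        then have "Q1 (U \<omega> - a) \<le> t" using gal by auto
        then show "1 * (indicator Sab (U \<omega>) * (((if Q1 (U \<omega> - a) \<le> t \<and> t < Y1 \<omega> then 1 else 0)
          - (if Y1 \<omega> \<le> t \<and> t < Q1 (U \<omega> - a) then 1 else 0)) * cderiv f (t - Q0 (U \<omega>)))) =
          (if Y1 \<omega> \<le> t then 0 else cderiv f (t - Q0 (U \<omega>)))" using E by auto }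
      { assume E: "U \<omega> \<in> Sab" and P: "U \<omega> \<notin> {..a + F1 t}"
        then have "\<not> Q1 (U \<omega> - a) \<le> t" using gal by auto
        then show "1 * (indicator Sab (U \<omega>) * (((if Q1 (U \<omega> - a) \<le> t \<and> t < Y1 \<omega> then 1 else 0)
          - (if Y1 \<omega> \<le> t \<and> t < Q1 (U \<omega> - a) then 1 else 0)) * cderiv f (t - Q0 (U \<omega>)))) =
          (if Y1 \<omega> \<le> t then - cderiv f (t - Q0 (U \<omega>)) else 0)" using E by auto }
      { assume "U \<omega> \<notin> Sab"
        then show "1 * (indicator Sab (U \<omega>) * (((if Q1 (U \<omega> - a) \<le> t \<and> t < Y1 \<omega> then 1 else 0)
          - (if Y1 \<omega> \<le> t \<and> t < Q1 (U \<omega> - a) then 1 else 0)) * cderiv f (t - Q0 (U \<omega>)))) = 0" by simp }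
      show "0 \<le> cderiv f (t - Q0 (U \<omega>))" using D0 by simp
    next
      fix \<omega> \<omega>' assume "U \<omega> \<in> Sab" "U \<omega>' \<in> Sab" "U \<omega> \<in> {..a + F1 t}" "U \<omega>' \<notin> {..a + F1 t}"
      then have "Q0 (U \<omega>) \<le> Q0 (U \<omega>')" by (intro Q0mono) auto
      then show "cderiv f (t - Q0 (U \<omega>')) \<le> cderiv f (t - Q0 (U \<omega>))" by (intro monoD[OF Dm]) auto
    next
      have "measure M {\<omega> \<in> space M. U \<omega> \<in> Sab \<and> Y1 \<omega> \<le> t} \<le> min (b - a) (F1 t)" by (rule probR1)
      also have "\<dots> \<le> measure lborel (Sab \<inter> {..a + F1 t})" by (rule mIic[OF ab F1_bounds(1)])
      also have "\<dots> = measure M {\<omega> \<in> space M. U \<omega> \<in> Sab \<and> U \<omega> \<in> {..a + F1 t}}" by (rule probI[symmetric]) simp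
      finally show "measure M {\<omega> \<in> space M. U \<omega> \<in> Sab \<and> Y1 \<omega> \<le> t} \<le> measure M {\<omega> \<in> space M. U \<omega> \<in> Sab \<and> U \<omega> \<in> {..a + F1 t}}" .
    qed
  qed
  then show ?thesis by simp
qed

lemma partUf:
  fixes f :: "real \<Rightarrow> real"
  assumes mf: "mono f" and cvx: "convex_on UNIV f"
    and intE: "integrable M (\<lambda>\<omega>. f (Y1 \<omega> - Y0 \<omega>) * indicator Sab (U \<omega>))"
    and intL: "set_integrable lborel Sab (\<lambda>u. f (Q1 (1 - u + a) - Q0 u))"
  shows "(\<integral>\<omega>. f (Y1 \<omega> - Y0 \<omega>) * indicator Sab (U \<omega>) \<partial>M) \<le> (LINT u:Sab|lborel. f (Q1 (1 - u + a) - Q0 u))"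
proof -
  have D0: "\<forall>t. 0 \<le> cderiv f t" using cderiv_nonneg[OF cvx mf] by auto
  have Dm: "mono (cderiv f)" by (rule cderiv_mono[OF cvx])
  have gal: "t < Q1 (1 - u + a) \<longleftrightarrow> u < a + (1 - F1 t)" if "u \<in> Sab" for u t
    using gal1[of "1 - u + a" t] that a0 b1 by auto
  have "0 \<le> (-1) * ((\<integral>\<omega>. f (Y1 \<omega> - Y0 \<omega>) * indicator Sab (U \<omega>) \<partial>M) - (LINT u:Sab|lborel. f (Q1 (1 - u + a) - Q0 u)))"
  proof (rule part[OF cvx _ _ intL intE])
    show "(\<forall>t. 0 \<le> cderiv f t) \<or> (\<forall>t. cderiv f t \<le> 0)" using D0 by simp
    show "(\<lambda>u. Q1 (1 - u + a)) \<in> borel_measurable borel" by measurable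
    fix t
    show "0 \<le> (\<integral>\<omega>. (-1) * (indicator Sab (U \<omega>) * (((if Q1 (1 - U \<omega> + a) \<le> t \<and> t < Y1 \<omega> then 1 else 0)
          - (if Y1 \<omega> \<le> t \<and> t < Q1 (1 - U \<omega> + a) then 1 else 0)) * cderiv f (t - Q0 (U \<omega>)))) \<partial>M)"
    proof (rule inner_pattern[OF PS, where E = "\<lambda>\<omega>. U \<omega> \<in> Sab" and P = "\<lambda>\<omega>. U \<omega> \<in> {..<a + (1 - F1 t)}"
          and R = "\<lambda>\<omega>. t < Y1 \<omega>" and W = "\<lambda>\<omega>. cderiv f (t - Q0 (U \<omega>))"])
      show "Measurable.pred M (\<lambda>\<omega>. U \<omega> \<in> Sab)" "Measurable.pred M (\<lambda>\<omega>. U \<omega> \<in> {..<a + (1 - F1 t)})"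
        "Measurable.pred M (\<lambda>\<omega>. t < Y1 \<omega>)" by measurable
      fix \<omega> assume \<omega>: "\<omega> \<in> space M"
      { assume E: "U \<omega> \<in> Sab" and P: "U \<omega> \<in> {..<a + (1 - F1 t)}"
        then have "t < Q1 (1 - U \<omega> + a)" using gal by auto
        then show "(-1) * (indicator Sab (U \<omega>) * (((if Q1 (1 - U \<omega> + a) \<le> t \<and> t < Y1 \<omega> then 1 else 0)
          - (if Y1 \<omega> \<le> t \<and> t < Q1 (1 - U \<omega> + a) then 1 else 0)) * cderiv f (t - Q0 (U \<omega>)))) =
          (if t < Y1 \<omega> then 0 else cderiv f (t - Q0 (U \<omega>)))" using E by auto }
      { assume E: "U \<omega> \<in> Sab" and P: "U \<omega> \<notin> {..<a + (1 - F1 t)}"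
        then have "\<not> t < Q1 (1 - U \<omega> + a)" using gal by auto
        then show "(-1) * (indicator Sab (U \<omega>) * (((if Q1 (1 - U \<omega> + a) \<le> t \<and> t < Y1 \<omega> then 1 else 0)
          - (if Y1 \<omega> \<le> t \<and> t < Q1 (1 - U \<omega> + a) then 1 else 0)) * cderiv f (t - Q0 (U \<omega>)))) =
          (if t < Y1 \<omega> then - cderiv f (t - Q0 (U \<omega>)) else 0)" using E by auto }
      { assume "U \<omega> \<notin> Sab"
        then show "(-1) * (indicator Sab (U \<omega>) * (((if Q1 (1 - U \<omega> + a) \<le> t \<and> t < Y1 \<omega> then 1 else 0)
          - (if Y1 \<omega> \<le> t \<and> t < Q1 (1 - U \<omega> + a) then 1 else 0)) * cderiv f (t - Q0 (U \<omega>)))) = 0" by simp }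
      show "0 \<le> cderiv f (t - Q0 (U \<omega>))" using D0 by simp
    next
      fix \<omega> \<omega>' assume "U \<omega> \<in> Sab" "U \<omega>' \<in> Sab" "U \<omega> \<in> {..<a + (1 - F1 t)}" "U \<omega>' \<notin> {..<a + (1 - F1 t)}"
      then have "Q0 (U \<omega>) \<le> Q0 (U \<omega>')" by (intro Q0mono) auto
      then show "cderiv f (t - Q0 (U \<omega>')) \<le> cderiv f (t - Q0 (U \<omega>))" by (intro monoD[OF Dm]) auto
    next
      have "measure M {\<omega> \<in> space M. U \<omega> \<in> Sab \<and> t < Y1 \<omega>} \<le> min (b - a) (1 - F1 t)" by (rule probR2)
      also have "\<dots> \<le> measure lborel (Sab \<inter> {..<a + (1 - F1 t)})" by (rule mIio[OF ab]) (use F1_bounds(2)[of t] in simp)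
      also have "\<dots> = measure M {\<omega> \<in> space M. U \<omega> \<in> Sab \<and> U \<omega> \<in> {..<a + (1 - F1 t)}}" by (rule probI[symmetric]) simp
      finally show "measure M {\<omega> \<in> space M. U \<omega> \<in> Sab \<and> t < Y1 \<omega>} \<le> measure M {\<omega> \<in> space M. U \<omega> \<in> Sab \<and> U \<omega> \<in> {..<a + (1 - F1 t)}}" .
    qed
  qed
  then show ?thesis by simp
qed

lemma partLg:
  fixes g :: "real \<Rightarrow> real"
  assumes mg: "antimono g" and cvx: "convex_on UNIV g"
    and intL: "set_integrable lborel Sab (\<lambda>u. g (Q1 (1 - b + u) - Q0 u))"
    and intE: "integrable M (\<lambda>\<omega>. g (Y1 \<omega> - Y0 \<omega>) * indicator Sab (U \<omega>))"
  shows "(LINT u:Sab|lborel. g (Q1 (1 - b + u) - Q0 u)) \<le> (\<integral>\<omega>. g (Y1 \<omega> - Y0 \<omega>) * indicator Sab (U \<omega>) \<partial>M)"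
proof -
  have D0: "\<forall>t. cderiv g t \<le> 0" using cderiv_nonpos[OF cvx mg] by auto
  have Dm: "mono (cderiv g)" by (rule cderiv_mono[OF cvx])
  have gal: "t < Q1 (1 - b + u) \<longleftrightarrow> b - (1 - F1 t) < u" if "u \<in> Sab" for u t
    using gal1[of "1 - b + u" t] that a0 b1 by auto
  have "0 \<le> 1 * ((\<integral>\<omega>. g (Y1 \<omega> - Y0 \<omega>) * indicator Sab (U \<omega>) \<partial>M) - (LINT u:Sab|lborel. g (Q1 (1 - b + u) - Q0 u)))"
  proof (rule part[OF cvx _ _ intL intE])
    show "(\<forall>t. 0 \<le> cderiv g t) \<or> (\<forall>t. cderiv g t \<le> 0)" using D0 by simp
    show "(\<lambda>u. Q1 (1 - b + u)) \<in> borel_measurable borel" by measurable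
    fix t
    show "0 \<le> (\<integral>\<omega>. 1 * (indicator Sab (U \<omega>) * (((if Q1 (1 - b + U \<omega>) \<le> t \<and> t < Y1 \<omega> then 1 else 0)
          - (if Y1 \<omega> \<le> t \<and> t < Q1 (1 - b + U \<omega>) then 1 else 0)) * cderiv g (t - Q0 (U \<omega>)))) \<partial>M)"
    proof (rule inner_pattern[OF PS, where E = "\<lambda>\<omega>. U \<omega> \<in> Sab" and P = "\<lambda>\<omega>. U \<omega> \<in> {b - (1 - F1 t)<..}"
          and R = "\<lambda>\<omega>. t < Y1 \<omega>" and W = "\<lambda>\<omega>. - cderiv g (t - Q0 (U \<omega>))"])
      show "Measurable.pred M (\<lambda>\<omega>. U \<omega> \<in> Sab)" "Measurable.pred M (\<lambda>\<omega>. U \<omega> \<in> {b - (1 - F1 t)<..})"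
        "Measurable.pred M (\<lambda>\<omega>. t < Y1 \<omega>)" by measurable
      fix \<omega> assume \<omega>: "\<omega> \<in> space M"
      { assume E: "U \<omega> \<in> Sab" and P: "U \<omega> \<in> {b - (1 - F1 t)<..}"
        then have "t < Q1 (1 - b + U \<omega>)" using gal by auto
        then show "1 * (indicator Sab (U \<omega>) * (((if Q1 (1 - b + U \<omega>) \<le> t \<and> t < Y1 \<omega> then 1 else 0)
          - (if Y1 \<omega> \<le> t \<and> t < Q1 (1 - b + U \<omega>) then 1 else 0)) * cderiv g (t - Q0 (U \<omega>)))) =
          (if t < Y1 \<omega> then 0 else - cderiv g (t - Q0 (U \<omega>)))" using E by auto }
      { assume E: "U \<omega> \<in> Sab" and P: "U \<omega> \<notin> {b - (1 - F1 t)<..}"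
        then have "\<not> t < Q1 (1 - b + U \<omega>)" using gal by auto
        then show "1 * (indicator Sab (U \<omega>) * (((if Q1 (1 - b + U \<omega>) \<le> t \<and> t < Y1 \<omega> then 1 else 0)
          - (if Y1 \<omega> \<le> t \<and> t < Q1 (1 - b + U \<omega>) then 1 else 0)) * cderiv g (t - Q0 (U \<omega>)))) =
          (if t < Y1 \<omega> then - (- cderiv g (t - Q0 (U \<omega>))) else 0)" using E by auto }
      { assume "U \<omega> \<notin> Sab"
        then show "1 * (indicator Sab (U \<omega>) * (((if Q1 (1 - b + U \<omega>) \<le> t \<and> t < Y1 \<omega> then 1 else 0)
          - (if Y1 \<omega> \<le> t \<and> t < Q1 (1 - b + U \<omega>) then 1 else 0)) * cderiv g (t - Q0 (U \<omega>)))) = 0" by simp }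
      show "0 \<le> - cderiv g (t - Q0 (U \<omega>))" using D0 by simp
    next
      fix \<omega> \<omega>' assume "U \<omega> \<in> Sab" "U \<omega>' \<in> Sab" "U \<omega> \<in> {b - (1 - F1 t)<..}" "U \<omega>' \<notin> {b - (1 - F1 t)<..}"
      then have "Q0 (U \<omega>') \<le> Q0 (U \<omega>)" by (intro Q0mono) auto
      then have "cderiv g (t - Q0 (U \<omega>)) \<le> cderiv g (t - Q0 (U \<omega>'))" by (intro monoD[OF Dm]) auto
      then show "- cderiv g (t - Q0 (U \<omega>')) \<le> - cderiv g (t - Q0 (U \<omega>))" by simp
    next
      have "measure M {\<omega> \<in> space M. U \<omega> \<in> Sab \<and> t < Y1 \<omega>} \<le> min (b - a) (1 - F1 t)" by (rule probR2)
      also have "\<dots> \<le> measure lborel (Sab \<inter> {b - (1 - F1 t)<..})" by (rule mIoi[OF ab]) (use F1_bounds(2)[of t] in simp)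
      also have "\<dots> = measure M {\<omega> \<in> space M. U \<omega> \<in> Sab \<and> U \<omega> \<in> {b - (1 - F1 t)<..}}" by (rule probI[symmetric]) simp
      finally show "measure M {\<omega> \<in> space M. U \<omega> \<in> Sab \<and> t < Y1 \<omega>} \<le> measure M {\<omega> \<in> space M. U \<omega> \<in> Sab \<and> U \<omega> \<in> {b - (1 - F1 t)<..}}" .
    qed
  qed
  then show ?thesis by simp
qed

lemma partUg:
  fixes g :: "real \<Rightarrow> real"
  assumes mg: "antimono g" and cvx: "convex_on UNIV g"
    and intE: "integrable M (\<lambda>\<omega>. g (Y1 \<omega> - Y0 \<omega>) * indicator Sab (U \<omega>))"
    and intL: "set_integrable lborel Sab (\<lambda>u. g (Q1 (b - u) - Q0 u))"
  shows "(\<integral>\<omega>. g (Y1 \<omega> - Y0 \<omega>) * indicator Sab (U \<omega>) \<partial>M) \<le> (LINT u:Sab|lborel. g (Q1 (b - u) - Q0 u))"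
proof -
  have D0: "\<forall>t. cderiv g t \<le> 0" using cderiv_nonpos[OF cvx mg] by auto
  have Dm: "mono (cderiv g)" by (rule cderiv_mono[OF cvx])
  have gal: "Q1 (b - u) \<le> t \<longleftrightarrow> b - F1 t \<le> u" if "u \<in> Sab" for u t
    using gal1[of "b - u" t] that a0 b1 by auto
  have "0 \<le> (-1) * ((\<integral>\<omega>. g (Y1 \<omega> - Y0 \<omega>) * indicator Sab (U \<omega>) \<partial>M) - (LINT u:Sab|lborel. g (Q1 (b - u) - Q0 u)))"
  proof (rule part[OF cvx _ _ intL intE])
    show "(\<forall>t. 0 \<le> cderiv g t) \<or> (\<forall>t. cderiv g t \<le> 0)" using D0 by simp
    show "(\<lambda>u. Q1 (b - u)) \<in> borel_measurable borel" by measurable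
    fix t
    show "0 \<le> (\<integral>\<omega>. (-1) * (indicator Sab (U \<omega>) * (((if Q1 (b - U \<omega>) \<le> t \<and> t < Y1 \<omega> then 1 else 0)
          - (if Y1 \<omega> \<le> t \<and> t < Q1 (b - U \<omega>) then 1 else 0)) * cderiv g (t - Q0 (U \<omega>)))) \<partial>M)"
    proof (rule inner_pattern[OF PS, where E = "\<lambda>\<omega>. U \<omega> \<in> Sab" and P = "\<lambda>\<omega>. U \<omega> \<in> {b - F1 t..}"
          and R = "\<lambda>\<omega>. Y1 \<omega> \<le> t" and W = "\<lambda>\<omega>. - cderiv g (t - Q0 (U \<omega>))"])
      show "Measurable.pred M (\<lambda>\<omega>. U \<omega> \<in> Sab)" "Measurable.pred M (\<lambda>\<omega>. U \<omega> \<in> {b - F1 t..})"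
        "Measurable.pred M (\<lambda>\<omega>. Y1 \<omega> \<le> t)" by measurable
      fix \<omega> assume \<omega>: "\<omega> \<in> space M"
      { assume E: "U \<omega> \<in> Sab" and P: "U \<omega> \<in> {b - F1 t..}"
        then have "Q1 (b - U \<omega>) \<le> t" using gal by auto
        then show "(-1) * (indicator Sab (U \<omega>) * (((if Q1 (b - U \<omega>) \<le> t \<and> t < Y1 \<omega> then 1 else 0)
          - (if Y1 \<omega> \<le> t \<and> t < Q1 (b - U \<omega>) then 1 else 0)) * cderiv g (t - Q0 (U \<omega>)))) =
          (if Y1 \<omega> \<le> t then 0 else - cderiv g (t - Q0 (U \<omega>)))" using E by auto }
      { assume E: "U \<omega> \<in> Sab" and P: "U \<omega> \<notin> {b - F1 t..}"
        then have "\<not> Q1 (b - U \<omega>) \<le> t" using gal by auto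
        then show "(-1) * (indicator Sab (U \<omega>) * (((if Q1 (b - U \<omega>) \<le> t \<and> t < Y1 \<omega> then 1 else 0)
          - (if Y1 \<omega> \<le> t \<and> t < Q1 (b - U \<omega>) then 1 else 0)) * cderiv g (t - Q0 (U \<omega>)))) =
          (if Y1 \<omega> \<le> t then - (- cderiv g (t - Q0 (U \<omega>))) else 0)" using E by auto }
      { assume "U \<omega> \<notin> Sab"
        then show "(-1) * (indicator Sab (U \<omega>) * (((if Q1 (b - U \<omega>) \<le> t \<and> t < Y1 \<omega> then 1 else 0)
          - (if Y1 \<omega> \<le> t \<and> t < Q1 (b - U \<omega>) then 1 else 0)) * cderiv g (t - Q0 (U \<omega>)))) = 0" by simp }
      show "0 \<le> - cderiv g (t - Q0 (U \<omega>))" using D0 by simp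
    next
      fix \<omega> \<omega>' assume "U \<omega> \<in> Sab" "U \<omega>' \<in> Sab" "U \<omega> \<in> {b - F1 t..}" "U \<omega>' \<notin> {b - F1 t..}"
      then have "Q0 (U \<omega>') \<le> Q0 (U \<omega>)" by (intro Q0mono) auto
      then have "cderiv g (t - Q0 (U \<omega>)) \<le> cderiv g (t - Q0 (U \<omega>'))" by (intro monoD[OF Dm]) auto
      then show "- cderiv g (t - Q0 (U \<omega>')) \<le> - cderiv g (t - Q0 (U \<omega>))" by simp
    next
      have "measure M {\<omega> \<in> space M. U \<omega> \<in> Sab \<and> Y1 \<omega> \<le> t} \<le> min (b - a) (F1 t)" by (rule probR1)
      also have "\<dots> \<le> measure lborel (Sab \<inter> {b - F1 t..})" by (rule mIci[OF ab F1_bounds(1)])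
      also have "\<dots> = measure M {\<omega> \<in> space M. U \<omega> \<in> Sab \<and> U \<omega> \<in> {b - F1 t..}}" by (rule probI[symmetric]) simp
      finally show "measure M {\<omega> \<in> space M. U \<omega> \<in> Sab \<and> Y1 \<omega> \<le> t} \<le> measure M {\<omega> \<in> space M. U \<omega> \<in> Sab \<and> U \<omega> \<in> {b - F1 t..}}" .
    qed
  qed
  then show ?thesis by simp
qed

end


theorem lemmaA2:
  fixes M :: "'a measure"
    and Y0 Y1 U :: "'a \<Rightarrow> real"
    and f g :: "real \<Rightarrow> real"
    and a b :: real
  defines "Q0 \<equiv> quantile (cdf (distr M borel Y0))"
      and "Q1 \<equiv> quantile (cdf (distr M borel Y1))"
  assumes "prob_space M"
    and "Y0 \<in> borel_measurable M" and "Y1 \<in> borel_measurable M" and "U \<in> borel_measurable M"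
    and "distr M lborel U = uniform_measure lborel {0..1}"
    and "AE \<omega> in M. Y0 \<omega> = Q0 (U \<omega>)"
    and "mono f" and "convex_on UNIV f"
    and "antimono g" and "convex_on UNIV g"
    and "0 \<le> a" and "a < b" and "b \<le> 1"
  shows
    "(set_integrable lborel {a<..<b} (\<lambda>u. f (Q1 (u - a) - Q0 u)) \<and>
      integrable M (\<lambda>\<omega>. f (Y1 \<omega> - Y0 \<omega>) * indicator {a<..<b} (U \<omega>)) \<longrightarrow>
      (LINT u:{a<..<b}|lborel. f (Q1 (u - a) - Q0 u))
        \<le> (\<integral>\<omega>. f (Y1 \<omega> - Y0 \<omega>) * indicator {a<..<b} (U \<omega>) \<partial>M))
   \<and> (integrable M (\<lambda>\<omega>. f (Y1 \<omega> - Y0 \<omega>) * indicator {a<..<b} (U \<omega>)) \<and>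
      set_integrable lborel {a<..<b} (\<lambda>u. f (Q1 (1 - u + a) - Q0 u)) \<longrightarrow>
      (\<integral>\<omega>. f (Y1 \<omega> - Y0 \<omega>) * indicator {a<..<b} (U \<omega>) \<partial>M)
        \<le> (LINT u:{a<..<b}|lborel. f (Q1 (1 - u + a) - Q0 u)))
   \<and> (set_integrable lborel {a<..<b} (\<lambda>u. g (Q1 (1 - b + u) - Q0 u)) \<and>
      integrable M (\<lambda>\<omega>. g (Y1 \<omega> - Y0 \<omega>) * indicator {a<..<b} (U \<omega>)) \<longrightarrow>
      (LINT u:{a<..<b}|lborel. g (Q1 (1 - b + u) - Q0 u))
        \<le> (\<integral>\<omega>. g (Y1 \<omega> - Y0 \<omega>) * indicator {a<..<b} (U \<omega>) \<partial>M))
   \<and> (integrable M (\<lambda>\<omega>. g (Y1 \<omega> - Y0 \<omega>) * indicator {a<..<b} (U \<omega>)) \<and>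
      set_integrable lborel {a<..<b} (\<lambda>u. g (Q1 (b - u) - Q0 u)) \<longrightarrow>
      (\<integral>\<omega>. g (Y1 \<omega> - Y0 \<omega>) * indicator {a<..<b} (U \<omega>) \<partial>M)
        \<le> (LINT u:{a<..<b}|lborel. g (Q1 (b - u) - Q0 u)))"
proof -
  have Q0e: "Q0 = quantile (cdf (distr M borel Y0))" using assms(1) by (rule meta_eq_to_obj_eq)
  have Q1e: "Q1 = quantile (cdf (distr M borel Y1))" using assms(2) by (rule meta_eq_to_obj_eq)
  have ae': "AE \<omega> in M. Y0 \<omega> = quantile (cdf (distr M borel Y0)) (U \<omega>)"
    using assms(8) unfolding Q0e .
  interpret L: lsetup M Y0 Y1 U a b
    by (rule lsetup.intro[OF assms(3-7) ae' assms(13-15)])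
  note Lf = L.partLf[OF assms(9,10)]
  note Uf = L.partUf[OF assms(9,10)]
  note Lg = L.partLg[OF assms(11,12)]
  note Ug = L.partUg[OF assms(11,12)]
  show ?thesis
    unfolding Q0e Q1e
    apply (intro conjI impI)
       apply (elim conjE, rule Lf; assumption)
      apply (elim conjE, rule Uf; assumption)
     apply (elim conjE, rule Lg; assumption)
    apply (elim conjE, rule Ug; assumption)
    done
qed

end
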